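(* For all integers $s,d\geq 1$ there exists an integer $h'(s,d)$ such that the following holds. Let $S$ be a set of $s$ nonzero vectors in $\mathbb{R}^d$, and let $\mathcal{F}=\{U_1,\dots,U_n\}$ be a finite family where each $U_i$ is (the underlying set of) a polyhedral subcomplex of some polytope $P_i\subseteq\mathbb{R}^d$ which can be obtained as an intersection of half-spaces whose normal vectors belong to $S$. Then $\mathcal{F}$ has Helly number at most $h'(s,d)$.
   Context: A polytope is a bounded intersection of finitely many closed half-spaces; a polyhedral subcomplex of a polytope $P$ is a collection of faces of $P$ closed under taking faces. The Helly number of a family $\mathcal{F}$ of sets is defined as follows: if $\bigcap_{U\in\mathcal{F}}U=\emptyset$, it is the largest size of a subfamily $\mathcal{G}\subseteq\mathcal{F}$ such that $\bigcap\mathcal{G}=\emptyset$ but every proper subfamily of $\mathcal{G}$ has nonempty intersection; otherwise the Helly number is $1$. *)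

theory Defs
  imports "HOL-Analysis.Analysis"
begin

definition S_polytope :: "'a::euclidean_space set \<Rightarrow> 'a set \<Rightarrow> bool" where
  "S_polytope S P \<longleftrightarrow> bounded P \<and>
     (\<exists>H. finite H \<and> fst ` H \<subseteq> S \<and> P = (\<Inter>p\<in>H. {x. fst p \<bullet> x \<le> snd p}))"

definition polyhedral_subcomplex :: "'a::euclidean_space set set \<Rightarrow> 'a set \<Rightarrow> bool" where
  "polyhedral_subcomplex C P \<longleftrightarrow>
     (\<forall>f\<in>C. f face_of P) \<and> (\<forall>f\<in>C. \<forall>g. g face_of f \<longrightarrow> g \<in> C)"

definition helly_number :: "'a set set \<Rightarrow> nat" where
  "helly_number F =
     (if \<Inter>F = {} then
        Max {card G | G. G \<subseteq> F \<and> \<Inter>G = {} \<and> (\<forall>G'. G' \<subset> G \<longrightarrow> \<Inter>G' \<noteq> {})}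
      else 1)"

end

theory Submission
  imports Defs
begin

lemma key:
  fixes HH :: "('a::euclidean_space \<times> real) set"
  assumes fin: "finite HH"
  and x: "\<forall>p\<in>HH. fst p \<bullet> x \<le> snd p" and x': "\<forall>p\<in>HH. fst p \<bullet> x' \<le> snd p"
  and Z: "fst ` {p\<in>HH. fst p \<bullet> x = snd p} = fst ` {p\<in>HH. fst p \<bullet> x' = snd p}"
  and H: "H \<subseteq> HH" and P: "P = (\<Inter>p\<in>H. {y. fst p \<bullet> y \<le> snd p})"
  and f: "f face_of P" and xf: "x \<in> f"
  shows "x' \<in> f"
proof (cases "x = x'")
  case True then show ?thesis using xf by simp
next
  case False
  define T where "T = {p\<in>HH. fst p \<bullet> x = snd p}"
  have T': "T = {p\<in>HH. fst p \<bullet> x' = snd p}"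
  proof -
    have "fst p \<bullet> x' = snd p" if "p \<in> HH" "fst p \<bullet> x = snd p" for p
    proof -
      have "fst p \<in> fst ` {p\<in>HH. fst p \<bullet> x' = snd p}" using Z that by blast
      then obtain q where q: "q \<in> HH" "fst q = fst p" "fst p \<bullet> x' = snd q" by force
      have "snd p \<le> snd q" using x q that by force
      moreover have "snd q \<le> snd p" using x' that q by force
      ultimately show ?thesis using q by simp
    qed
    moreover have "fst p \<bullet> x = snd p" if "p \<in> HH" "fst p \<bullet> x' = snd p" for p
    proof -
      have "fst p \<in> fst ` {p\<in>HH. fst p \<bullet> x = snd p}" using Z that by blast
      then obtain q where q: "q \<in> HH" "fst q = fst p" "fst p \<bullet> x = snd q" by force
      have "snd p \<le> snd q" using x' q that by force
      moreover have "snd q \<le> snd p" using x that q by force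
      ultimately show ?thesis using q by simp
    qed
    ultimately show ?thesis unfolding T_def by blast
  qed
  define Op where "Op = (\<Inter>p\<in>HH - T. {y. fst p \<bullet> y < snd p})"
  have "open Op" unfolding Op_def using fin by (intro open_INT) (auto intro: open_halfspace_lt)
  moreover have "x \<in> Op" unfolding Op_def T_def using x by force
  ultimately obtain e where e: "e > 0" "ball x e \<subseteq> Op" by (meson open_contains_ball)
  have nz: "norm (x - x') > 0" using False by simp
  define t where "t = e / (2 * norm (x - x'))"
  have t: "t > 0" unfolding t_def using e nz by simp
  define z where "z = x + t *\<^sub>R (x - x')"
  have "dist x z = t * norm (x - x')" unfolding z_def dist_norm by (simp add: t less_imp_le)
  also have "\<dots> = e / 2" unfolding t_def using nz by simp
  finally have "z \<in> ball x e" using e by simp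
  hence zO: "z \<in> Op" using e by blast
  have zP: "z \<in> P"
  proof -
    have "fst p \<bullet> z \<le> snd p" if "p \<in> H" for p
    proof (cases "p \<in> T")
      case True
      then have "fst p \<bullet> x = snd p" "fst p \<bullet> x' = snd p" using T' unfolding T_def by auto
      then show ?thesis unfolding z_def by (simp add: inner_add_right inner_diff_right)
    next
      case False
      then show ?thesis using zO that H unfolding Op_def by force
    qed
    then show ?thesis using P by auto
  qed
  have x'P: "x' \<in> P" using x' H P by auto
  have zx': "z \<noteq> x'"
  proof
    assume "z = x'"
    then have "(1 + t) *\<^sub>R (x - x') = 0" unfolding z_def by (simp add: algebra_simps)
    then show False using t False by simp
  qed
  have "x \<in> open_segment z x'"
  proof -
    define u where "u = t / (1 + t)"
    have u: "u > 0" "u < 1" unfolding u_def using t by auto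
    have "(1 - u) *\<^sub>R z + u *\<^sub>R x' = x"
    proof -
      have "1 - u = 1 / (1 + t)" unfolding u_def using t by (simp add: field_simps)
      then have "(1 - u) *\<^sub>R z + u *\<^sub>R x' = (1/(1+t)) *\<^sub>R (z + t *\<^sub>R x')" unfolding u_def
        by (simp add: scaleR_add_right divide_inverse)
      also have "z + t *\<^sub>R x' = (1 + t) *\<^sub>R x" unfolding z_def by (simp add: algebra_simps)
      finally show ?thesis using t by simp
    qed
    then show ?thesis using u zx' unfolding in_segment by metis
  qed
  then show ?thesis using f zP x'P xf unfolding face_of_def by blast
qed

lemma bound:
  fixes S :: "('a::euclidean_space) set" and G :: "'a set set"
  assumes finS: "finite S" and finG: "finite G"
  and hyp: "\<forall>U\<in>G. \<exists>P C. S_polytope S P \<and> polyhedral_subcomplex C P \<and> U = \<Union>C"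
  and emp: "\<Inter>G = {}" and minl: "\<forall>G'. G' \<subset> G \<longrightarrow> \<Inter>G' \<noteq> {}"
  shows "card G \<le> card S + 2 ^ card S"
proof -
  define Q where "Q U X \<longleftrightarrow> finite (fst X) \<and> fst ` (fst X) \<subseteq> S \<and>
      fst (snd X) = (\<Inter>p\<in>fst X. {x. fst p \<bullet> x \<le> snd p}) \<and>
      polyhedral_subcomplex (snd (snd X)) (fst (snd X)) \<and> U = \<Union>(snd (snd X))"
    for U :: "'a set" and X :: "('a \<times> real) set \<times> 'a set \<times> 'a set set"
  have "\<forall>U\<in>G. \<exists>X. Q U X"
  proof
    fix U assume "U \<in> G"
    then obtain P C where "S_polytope S P" "polyhedral_subcomplex C P" "U = \<Union>C" using hyp by blast
    then obtain H where "finite H" "fst ` H \<subseteq> S" "P = (\<Inter>p\<in>H. {x. fst p \<bullet> x \<le> snd p})"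
      unfolding S_polytope_def by blast
    then have "Q U (H, P, C)"
      using \<open>polyhedral_subcomplex C P\<close> \<open>U = \<Union>C\<close> unfolding Q_def by simp
    then show "\<exists>X. Q U X" by blast
  qed
  then obtain X where XQ: "\<forall>U\<in>G. Q U (X U)" using bchoice[of G "Q"] by blast
  have X: "finite (fst (X U)) \<and> fst ` (fst (X U)) \<subseteq> S \<and>
      fst (snd (X U)) = (\<Inter>p\<in>fst (X U). {x. fst p \<bullet> x \<le> snd p}) \<and>
      polyhedral_subcomplex (snd (snd (X U))) (fst (snd (X U))) \<and> U = \<Union>(snd (snd (X U)))" if "U \<in> G" for U
  proof -
    have "Q U (X U)" using XQ that by blast
    then show ?thesis unfolding Q_def .
  qed
  define HF where "HF U = fst (X U)" for U
  define PP where "PP U = fst (snd (X U))" for U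
  define CC where "CC U = snd (snd (X U))" for U
  have HF: "\<And>U. U \<in> G \<Longrightarrow> finite (HF U) \<and> fst ` HF U \<subseteq> S"
    using X unfolding HF_def by blast
  have PP: "\<And>U. U \<in> G \<Longrightarrow> PP U = (\<Inter>p\<in>HF U. {x. fst p \<bullet> x \<le> snd p})"
    using X unfolding HF_def PP_def by blast
  have CC: "\<And>U. U \<in> G \<Longrightarrow> polyhedral_subcomplex (CC U) (PP U) \<and> U = \<Union>(CC U)"
    using X unfolding PP_def CC_def by blast
  have UP: "U \<subseteq> PP U" if UG: "U \<in> G" for U
  proof
    fix x assume "x \<in> U"
    then obtain f where f: "f \<in> CC U" "x \<in> f" using CC[OF UG] by blast
    then have "f face_of PP U" using CC[OF UG] unfolding polyhedral_subcomplex_def by blast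
    then show "x \<in> PP U" using f face_of_imp_subset by blast
  qed
  define HH where "HH = (\<Union>U\<in>G. HF U)"
  have finHH: "finite HH" unfolding HH_def using finG HF by auto
  have fstHH: "fst ` HH \<subseteq> S" unfolding HH_def using HF by blast
  define bmin where "bmin v = Min {b. (v, b) \<in> HH}" for v
  have bfin: "finite {b. (v, b) \<in> HH}" for v
  proof -
    have "{b. (v, b) \<in> HH} \<subseteq> snd ` HH" by force
    then show ?thesis using finHH finite_subset by blast
  qed
  have "\<forall>v\<in>fst ` HH. \<exists>U\<in>G. (v, bmin v) \<in> HF U"
  proof
    fix v assume "v \<in> fst ` HH"
    then have "{b. (v, b) \<in> HH} \<noteq> {}" by force
    then have "bmin v \<in> {b. (v, b) \<in> HH}" unfolding bmin_def using bfin Min_in by blast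
    then show "\<exists>U\<in>G. (v, bmin v) \<in> HF U" unfolding HH_def by blast
  qed
  then obtain sel where sel: "\<And>v. v \<in> fst ` HH \<Longrightarrow> sel v \<in> G \<and> (v, bmin v) \<in> HF (sel v)"
    by metis
  define A where "A = sel ` (fst ` HH)"
  have AG: "A \<subseteq> G" unfolding A_def using sel by blast
  have cardA: "card A \<le> card S"
    unfolding A_def using card_image_le finHH card_mono[OF finS fstHH]
    by (meson finite_imageI le_trans)
  have inR: "\<forall>p\<in>HH. fst p \<bullet> x \<le> snd p" if "\<forall>V\<in>A. x \<in> PP V" for x
  proof
    fix p assume p: "p \<in> HH"
    obtain v b where vb: "p = (v, b)" by force
    have v: "v \<in> fst ` HH" using p vb by force
    have "x \<in> PP (sel v)" using that v unfolding A_def by blast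
    then have "v \<bullet> x \<le> bmin v" using PP sel[OF v] by auto
    also have "bmin v \<le> b" unfolding bmin_def using bfin p vb by (intro Min_le) auto
    finally show "fst p \<bullet> x \<le> snd p" using vb by simp
  qed
  have "\<forall>U\<in>G. \<exists>y. y \<in> \<Inter>(G - {U})"
  proof
    fix U assume "U \<in> G"
    then have "G - {U} \<subset> G" by blast
    then show "\<exists>y. y \<in> \<Inter>(G - {U})" using minl by blast
  qed
  then obtain w where w: "\<And>U. U \<in> G \<Longrightarrow> w U \<in> \<Inter>(G - {U})" by metis
  have wn: "w U \<notin> U" if "U \<in> G" for U
    using w[OF that] emp that by blast
  define Zf where "Zf x = fst ` {p\<in>HH. fst p \<bullet> x = snd p}" for x
  have wR: "\<forall>p\<in>HH. fst p \<bullet> w U \<le> snd p" if "U \<in> G - A" for U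
  proof (rule inR, intro ballI)
    fix V assume "V \<in> A"
    then have "V \<in> G" "V \<noteq> U" using AG that by auto
    then have "w U \<in> V" using w that by blast
    then show "w U \<in> PP V" using UP \<open>V \<in> G\<close> by blast
  qed
  have inj: "inj_on (Zf \<circ> w) (G - A)"
  proof (rule inj_onI, rule ccontr)
    fix U U' assume U: "U \<in> G - A" and U': "U' \<in> G - A" and eq: "(Zf \<circ> w) U = (Zf \<circ> w) U'"
      and ne: "U \<noteq> U'"
    have "w U \<in> U'" using w U U' ne by blast
    then obtain f where f: "f \<in> CC U'" "w U \<in> f" using CC U' by blast
    have ff: "f face_of PP U'" using CC U' f unfolding polyhedral_subcomplex_def by blast
    have "w U' \<in> f"
      apply (rule key[OF finHH wR[OF U] wR[OF U'] _ _ PP ff f(2)])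
      using eq U' unfolding Zf_def HH_def by auto
    then have "w U' \<in> U'" using f CC U' by blast
    then show False using wn U' by blast
  qed
  have "(Zf \<circ> w) ` (G - A) \<subseteq> Pow S" unfolding Zf_def using fstHH by auto
  then have "card (G - A) \<le> card (Pow S)"
    using card_inj_on_le[OF inj] finS by blast
  then have c2: "card (G - A) \<le> 2 ^ card S" using card_Pow finS by metis
  have "card G \<le> card ((G - A) \<union> A)" using finG AG by (intro card_mono) (auto intro: finite_subset)
  also have "\<dots> \<le> card (G - A) + card A" by (rule card_Un_le)
  finally show ?thesis using c2 cardA by linarith
qed

theorem corollary5:
  fixes s :: nat
  assumes "s \<ge> 1"
  shows "\<exists>h::nat. \<forall>(S :: (real^'n) set) (F :: (real^'n) set set).
           finite S \<and> card S = s \<and> 0 \<notin> S \<and> finite F \<and>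
           (\<forall>U\<in>F. \<exists>P C. S_polytope S P \<and> polyhedral_subcomplex C P \<and> U = \<Union>C)
           \<longrightarrow> helly_number F \<le> h"
proof (intro exI[of _ "s + 2 ^ s"] allI impI)
  fix S :: "(real^'n) set" and F :: "(real^'n) set set"
  assume a: "finite S \<and> card S = s \<and> 0 \<notin> S \<and> finite F \<and>
           (\<forall>U\<in>F. \<exists>P C. S_polytope S P \<and> polyhedral_subcomplex C P \<and> U = \<Union>C)"
  show "helly_number F \<le> s + 2 ^ s"
  proof (cases "\<Inter>F = {}")
    case False then show ?thesis unfolding helly_number_def using assms by simp
  next
    case True
    define M where "M = {card G | G. G \<subseteq> F \<and> \<Inter>G = {} \<and> (\<forall>G'. G' \<subset> G \<longrightarrow> \<Inter>G' \<noteq> {})}"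
    have finM: "finite M"
    proof -
      have "M \<subseteq> card ` Pow F" unfolding M_def by blast
      then show ?thesis using a finite_subset by blast
    qed
    obtain G where G: "G \<subseteq> F \<and> \<Inter>G = {}" "\<And>G'. G' \<subseteq> F \<and> \<Inter>G' = {} \<Longrightarrow> card G \<le> card G'"
      using ex_has_least_nat[of "\<lambda>G. G \<subseteq> F \<and> \<Inter>G = {}" F card] True by blast
    have "\<forall>G'. G' \<subset> G \<longrightarrow> \<Inter>G' \<noteq> {}"
    proof (intro allI impI)
      fix G' assume "G' \<subset> G"
      then have "card G' < card G" using a G(1) finite_subset psubset_card_mono by metis
      then show "\<Inter>G' \<noteq> {}" using G(2)[of G'] \<open>G' \<subset> G\<close> G(1) by fastforce
    qed
    then have "card G \<in> M" unfolding M_def using G(1) by blast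
    then have neM: "M \<noteq> {}" by blast
    have "\<forall>m\<in>M. m \<le> s + 2 ^ s"
    proof
      fix m assume "m \<in> M"
      then obtain G where "m = card G" "G \<subseteq> F" "\<Inter>G = {}" "\<forall>G'. G' \<subset> G \<longrightarrow> \<Inter>G' \<noteq> {}"
        unfolding M_def by blast
      moreover have "finite G" using a \<open>G \<subseteq> F\<close> finite_subset by blast
      moreover have "\<forall>U\<in>G. \<exists>P C. S_polytope S P \<and> polyhedral_subcomplex C P \<and> U = \<Union>C"
        using a \<open>G \<subseteq> F\<close> by blast
      ultimately show "m \<le> s + 2 ^ s" using bound[of S G] a by auto
    qed
    then show ?thesis unfolding helly_number_def using True finM neM
      by (simp add: M_def[symmetric] Max_le_iff)
  qed
qed

end
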